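(* If $n,m>0$, then \[ \alpha_{n,m} = \frac{1}{4 \pi m} \left( 2 \sqrt{n} \arctan\left( \frac{m}{\sqrt{n}}\right) - m \log \left(\frac{4n}{n+m^2}\right) \right). \]
   Context: For $y>0$, $\alpha(y) := \frac{\sqrt{y}}{4 \pi} \int_0^{\infty} t^{-1/2} e^{- \pi y t} \log ( 1 + t)\, dt$, and for $m,n>0$, $\alpha_{n,m} := 4\pi (n+m^2) \int_0^{\infty}\alpha(4ny)e^{-4\pi (n+m^2)y}\,dy$. *)

theory Defs
  imports "HOL-Analysis.Analysis"
begin

definition alpha :: "real \<Rightarrow> real" where
  "alpha y = sqrt y / (4 * pi) *
     (LBINT t:{0<..}. t powr (-1/2) * exp (- pi * y * t) * ln (1 + t))"

definition alpha_nm :: "real \<Rightarrow> real \<Rightarrow> real" where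
  "alpha_nm n m = 4 * pi * (n + m^2) *
     (LBINT y:{0<..}. alpha (4 * n * y) * exp (- 4 * pi * (n + m^2) * y))"

end

theory Submission
  imports Defs "HOL-Real_Asymp.Real_Asymp"
begin

lemma dsq:
  fixes c d t :: real assumes "c*t+d > 0"
  shows "((\<lambda>t. sqrt(c*t+d)) has_real_derivative c/(2 * sqrt(c*t+d))) (at t)"
proof -
  have 1: "DERIV sqrt (c*t+d) :> inverse(sqrt(c*t+d))/2" by (rule DERIV_real_sqrt) (use assms in auto)
  have 2: "((\<lambda>t. c*t+d) has_real_derivative c) (at t)" by (auto intro!: derivative_eq_intros)
  from DERIV_chain2[OF 1 2] show ?thesis by (rule DERIV_cong) (simp add: field_simps)
qed

lemma dsq0:
  fixes c t :: real assumes "c*t > 0"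
  shows "((\<lambda>t. sqrt(c*t)) has_real_derivative c/(2 * sqrt(c*t))) (at t)"
  using dsq[of c t 0] assms by simp

lemma dPa:
  fixes n a t :: real assumes "n>0" "a>0" "t>0"
  shows "((\<lambda>t. sqrt(n * t) / sqrt(n * t+a)) has_real_derivative n * a/(2 * sqrt(n * t) * sqrt(n * t+a)^3)) (at t)"
proof -
  have p: "n*t > 0" "n*t+a > 0" using assms by (auto intro!: add_pos_pos)
  have r: "sqrt(n * t) > 0" "sqrt(n * t+a) > 0" using p by auto
  have e: "sqrt(n * t)^2 = n * t" "sqrt(n * t+a)^2 = n * t+a" using p by auto
  have "((\<lambda>t. sqrt(n * t) / sqrt(n * t+a)) has_real_derivative
     ((n/(2 * sqrt(n*t))) * sqrt(n*t+a) - sqrt(n*t) * (n/(2 * sqrt(n*t+a)))) / (sqrt(n*t+a) * sqrt(n*t+a))) (at t)"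
    by (rule DERIV_divide[OF dsq0 dsq]) (use p r in auto)
  then show ?thesis
  proof (rule DERIV_cong)
    show "((n/(2 * sqrt(n*t))) * sqrt(n*t+a) - sqrt(n*t) * (n/(2 * sqrt(n*t+a)))) / (sqrt(n*t+a) * sqrt(n*t+a))
       = n * a/(2 * sqrt(n * t) * sqrt(n * t+a)^3)"
    proof -
      define r where "r = sqrt(n*t)"
      define s where "s = sqrt(n*t+a)"
      have rs: "r > 0" "s > 0" using r by (auto simp: r_def s_def)
      have ea: "a = s^2 - r^2" using e by (simp add: r_def s_def)
      show ?thesis unfolding r_def[symmetric] s_def[symmetric] unfolding ea
        using rs by (simp add: field_simps power2_eq_square power3_eq_cube)
    qed
  qed
qed

lemma dQ:
  fixes n a t :: real assumes "n>0" "a>0" "t>0"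
  shows "((\<lambda>t. ln (sqrt(n * t) + sqrt(n * t+a))) has_real_derivative n/(2 * sqrt(n * t) * sqrt(n * t+a))) (at t)"
proof -
  have p: "n*t > 0" "n*t+a > 0" using assms by (auto intro!: add_pos_pos)
  have r: "sqrt(n * t) > 0" "sqrt(n * t+a) > 0" using p by auto
  have 1: "DERIV ln (sqrt(n * t) + sqrt(n * t+a)) :> 1/(sqrt(n * t) + sqrt(n * t+a))"
    by (rule DERIV_ln_divide) (use r in \<open>auto intro!: add_pos_pos\<close>)
  have 2: "((\<lambda>t. sqrt(n * t) + sqrt(n * t+a)) has_real_derivative n/(2 * sqrt(n*t)) + n/(2 * sqrt(n*t+a))) (at t)"
    by (rule DERIV_add[OF dsq0 dsq]) (use p in auto)
  from DERIV_chain2[OF 1 2] show ?thesis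
  proof (rule DERIV_cong)
    show "1 / (sqrt (n * t) + sqrt (n * t + a)) * (n / (2 * sqrt (n * t)) + n / (2 * sqrt (n * t + a))) =
        n / (2 * sqrt (n * t) * sqrt (n * t + a))"
    proof -
      define r where "r = sqrt(n*t)"
      define s where "s = sqrt(n*t+a)"
      have rs: "r > 0" "s > 0" using r by (auto simp: r_def s_def)
      have "n/(2*r) + n/(2* s) = n*(r+s)/(2*r * s)" using rs by (simp add: field_simps)
      moreover have "r + s > 0" using rs by simp
      ultimately show ?thesis unfolding r_def[symmetric] s_def[symmetric]
        using rs by simp
    qed
  qed
qed

lemma aux_cancel:
  fixes A Y s w m :: real
  shows "s>0 \<Longrightarrow> w>0 \<Longrightarrow> m>0 \<Longrightarrow> A>0 \<Longrightarrow> 2*w/m * (inverse(A/s^2) * (m/w * Y)) = 2 * Y / (A/s^2)"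
  by (simp add: field_simps)

lemma aux_cancel2:
  fixes r s a B n :: real
  shows "r>0 \<Longrightarrow> s>0 \<Longrightarrow> a>0 \<Longrightarrow> B>0 \<Longrightarrow> 2 * (n*a/(2*r * s^3)) / (a*B/s^2) = n/(r * s*B)"
  by (simp add: field_simps power2_eq_square power3_eq_cube)

lemma dR:
  fixes n m a t :: real assumes "n>0" "m>0" "t>0" and a: "a = n + m^2"
  shows "((\<lambda>t. 2 * sqrt n / m * arctan (m / sqrt n * (sqrt(n * t) / sqrt(n * t+a)))) has_real_derivative
     n/(sqrt(n * t) * sqrt(n * t+a) * (1+t))) (at t)"
proof -
  have "a > 0" using a assms by (simp add: add_pos_nonneg)
  have p: "n*t > 0" "n*t+a > 0" using assms \<open>a>0\<close> by (auto intro!: add_pos_pos)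
  have r: "sqrt(n * t) > 0" "sqrt(n * t+a) > 0" using p by auto
  have e: "sqrt(n * t)^2 = n * t" "sqrt(n * t+a)^2 = n * t+a" using p by auto
  have 1: "DERIV arctan (m / sqrt n * (sqrt(n * t) / sqrt(n * t+a))) :> inverse (1 + (m / sqrt n * (sqrt(n * t) / sqrt(n * t+a)))^2)"
    by (rule DERIV_arctan)
  have 2: "((\<lambda>t. m / sqrt n * (sqrt(n * t) / sqrt(n * t+a))) has_real_derivative m / sqrt n * (n * a/(2 * sqrt(n * t) * sqrt(n * t+a)^3))) (at t)"
    by (rule DERIV_cmult[OF dPa]) (use assms \<open>a>0\<close> in auto)
  from DERIV_cmult[OF DERIV_chain2[OF 1 2], of "2 * sqrt n / m"] show ?thesis
  proof (rule DERIV_cong)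
    define r where "r = sqrt(n*t)"
    define s where "s = sqrt(n*t+a)"
    define w where "w = sqrt n"
    have rs: "r > 0" "s > 0" "w > 0" using r assms by (auto simp: r_def s_def w_def)
    have ee: "s^2 = r^2 + a" "r^2 = n * t" "n = w^2" using e assms by (auto simp: r_def s_def w_def)
    show "2 * sqrt n / m * (inverse (1 + (m / sqrt n * (sqrt(n * t) / sqrt(n * t+a)))^2) * (m / sqrt n * (n * a/(2 * sqrt(n * t) * sqrt(n * t+a)^3))))
      = n/(sqrt(n * t) * sqrt(n * t+a) * (1+t))"
    proof -
      have D1: "(m/w*(r/s))^2 = m^2 * r^2/(w^2 * s^2)" by (simp add: power_mult_distrib power_divide)
      also have "\<dots> = m^2*t/s^2" using ee rs by simp
      finally have D2: "1 + (m/w*(r/s))^2 = (s^2 + m^2*t)/s^2" using rs by (simp add: field_simps)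
      have D: "1 + (m/w*(r/s))^2 = a*(1+t)/s^2" unfolding D2 using ee a by (simp add: algebra_simps)
      have "a*(1+t) > 0" using \<open>a>0\<close> assms by simp
      have "2*w/m * (inverse(1 + (m/w*(r/s))^2) * (m/w * (n*a/(2*r * s^3)))) = 2 * (n*a/(2*r * s^3)) / (a*(1+t)/s^2)"
        unfolding D by (rule aux_cancel) (use rs assms(2) \<open>a*(1+t) > 0\<close> in auto)
      also have "\<dots> = n/(r * s*(1+t))"
        by (rule aux_cancel2) (use rs \<open>a>0\<close> assms(3) in auto)
      finally have "2*w/m * (inverse(1 + (m/w*(r/s))^2) * (m/w * (n*a/(2*r * s^3)))) = n/(r * s*(1+t))" .
      then show ?thesis unfolding r_def s_def w_def .
    qed
  qed
qed

definition Fb :: "real \<Rightarrow> real \<Rightarrow> real \<Rightarrow> real \<Rightarrow> real" where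
  "Fb n a m t = ln(1+t) * (sqrt(n * t) / sqrt(n * t+a)) - 2 * ln (sqrt(n * t) + sqrt(n * t+a))
     + 2 * sqrt n / m * arctan (m / sqrt n * (sqrt(n * t) / sqrt(n * t+a)))"

lemma aux_comb:
  fixes r s n t L Y :: real
  shows "r>0 \<Longrightarrow> s>0 \<Longrightarrow> B>0 \<Longrightarrow> r^2 = n*(B-1) \<Longrightarrow>
    1/B * (r/s) + Y * L - 2 * (n/(2 * r * s)) + n/(r * s * B) = Y * L"
proof -
  assume h: "r>0" "s>0" "B>0" "r^2 = n*(B-1)"
  have "1/B * (r/s) - 2 * (n/(2 * r * s)) + n/(r * s * B) = (r^2 - n*(B-1))/(r * s * B)"
    using h by (simp add: field_simps power2_eq_square)
  also have "\<dots> = 0" using h by simp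
  finally show ?thesis by simp
qed

lemma dFb:
  fixes n m a t :: real assumes "n>0" "m>0" "t>0" and a: "a = n + m^2"
  shows "(Fb n a m has_real_derivative (n * a / (2 * sqrt(n * t) * sqrt(n * t+a)^3)) * ln(1+t)) (at t)"
proof -
  have "a > 0" using a assms by (simp add: add_pos_nonneg)
  have p: "n*t > 0" "n*t+a > 0" using assms \<open>a>0\<close> by (auto intro!: add_pos_pos)
  have r: "sqrt(n * t) > 0" "sqrt(n * t+a) > 0" using p by auto
  have e: "sqrt(n * t)^2 = n * t" using p by auto
  have l: "((\<lambda>t. ln (1+t)) has_real_derivative 1/(1+t)) (at t)"
    using assms by (auto intro!: derivative_eq_intros)
  have D: "(Fb n a m has_real_derivative
     (1/(1+t) * (sqrt(n * t) / sqrt(n * t+a)) + (n * a/(2 * sqrt(n * t) * sqrt(n * t+a)^3)) * ln(1+t))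
     - 2 * (n/(2 * sqrt(n * t) * sqrt(n * t+a))) + n/(sqrt(n * t) * sqrt(n * t+a) * (1+t))) (at t)"
    unfolding Fb_def[abs_def]
    by (intro DERIV_add DERIV_diff DERIV_mult DERIV_cmult l dPa[OF assms(1) \<open>a>0\<close> assms(3)]
        dQ[OF assms(1) \<open>a>0\<close> assms(3)] dR[OF assms(1,2,3) a])
  have e': "sqrt(n * t)^2 = n * (1 + t - 1)" using e by simp
  show ?thesis
    by (rule DERIV_cong[OF D]) (rule aux_comb[OF r(1,2) _ e'], use assms in auto)
qed

lemma Fb_0:
  fixes n m a :: real assumes "n>0" "m>0" "a>0"
  shows "(Fb n a m \<longlongrightarrow> - ln a) (at_right 0)"
proof -
  have "isCont (Fb n a m) 0"
    unfolding Fb_def using assms by (intro continuous_intros) auto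
  then have "(Fb n a m \<longlongrightarrow> Fb n a m 0) (at_right 0)"
    by (simp add: isCont_def filterlim_at_split)
  moreover have "Fb n a m 0 = - ln a" using assms by (simp add: Fb_def ln_sqrt)
  ultimately show ?thesis by simp
qed

lemma Fb_top:
  fixes n m a :: real assumes "n>0" "m>0" "a>0"
  shows "(Fb n a m \<longlongrightarrow> - ln (4*n) + 2 * sqrt n / m * arctan (m / sqrt n)) at_top"
proof -
  have L1: "((\<lambda>t. ln(1+t) * (sqrt (n*t) / sqrt(n*t+a) - 1)) \<longlongrightarrow> 0) at_top"
    using assms by real_asymp
  have L2': "((\<lambda>t. (1+t) / (sqrt (n*t) + sqrt(n*t+a))^2) \<longlongrightarrow> inverse ((n powr (1 / 2))^2) / 4) at_top"
    using assms by real_asymp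
  have "inverse ((n powr (1 / 2))^2) / 4 = 1/(4*n)" using assms by (simp add: powr_half_sqrt inverse_eq_divide)
  with L2' have L2: "((\<lambda>t. ln ((1+t) / (sqrt (n*t) + sqrt(n*t+a))^2)) \<longlongrightarrow> ln (1/(4*n))) at_top"
    using assms by (intro tendsto_ln) auto
  have L3': "((\<lambda>t. sqrt (n*t) / sqrt(n*t+a)) \<longlongrightarrow> 1) at_top"
    using assms by real_asymp
  have L3: "((\<lambda>t. 2 * sqrt n / m * arctan (m / sqrt n * (sqrt(n * t) / sqrt(n * t+a)))) \<longlongrightarrow>
     2 * sqrt n / m * arctan (m / sqrt n * 1)) at_top"
    by (intro tendsto_intros L3')
  have "((\<lambda>t. ln(1+t) * (sqrt (n*t) / sqrt(n*t+a) - 1) + ln ((1+t) / (sqrt (n*t) + sqrt(n*t+a))^2)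
      + 2 * sqrt n / m * arctan (m / sqrt n * (sqrt(n * t) / sqrt(n * t+a)))) \<longlongrightarrow>
      0 + ln (1/(4*n)) + 2 * sqrt n / m * arctan (m / sqrt n * 1)) at_top"
    by (intro tendsto_intros L1 L2 L3)
  moreover have "eventually (\<lambda>t. ln(1+t) * (sqrt (n*t) / sqrt(n*t+a) - 1) + ln ((1+t) / (sqrt (n*t) + sqrt(n*t+a))^2)
      + 2 * sqrt n / m * arctan (m / sqrt n * (sqrt(n * t) / sqrt(n * t+a))) = Fb n a m t) at_top"
    using eventually_gt_at_top[of 0]
  proof eventually_elim
    case (elim t)
    have p: "n*t > 0" "n*t+a > 0" using assms elim by (auto intro!: add_pos_pos)
    have "sqrt (n*t) + sqrt(n*t+a) > 0" using p by (simp add: add_pos_pos)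
    then have "ln ((1+t) / (sqrt (n*t) + sqrt(n*t+a))^2) = ln (1+t) - 2 * ln (sqrt (n*t) + sqrt(n*t+a))"
      using elim by (simp add: ln_div ln_realpow)
    then show ?case unfolding Fb_def by (simp add: algebra_simps)
  qed
  ultimately have "(Fb n a m \<longlongrightarrow> 0 + ln (1/(4*n)) + 2 * sqrt n / m * arctan (m / sqrt n * 1)) at_top"
    by (rule Lim_transform_eventually)
  moreover have "0 + ln (1/(4*n)) + 2 * sqrt n / m * arctan (m / sqrt n * 1) = - ln (4*n) + 2 * sqrt n / m * arctan (m / sqrt n)"
    using assms by (simp add: ln_div)
  ultimately show ?thesis by simp
qed

lemma Gamma_three_halves: "Gamma (3/2::real) = sqrt pi / 2"
proof -
  have "(1/2::real) \<notin> \<int>\<^sub>\<le>\<^sub>0"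
    by (metis not_less nonpos_Ints_nonpos zero_less_divide_1_iff zero_less_numeral)
  then have "Gamma (1/2 + 1::real) = 1/2 * Gamma (1/2)" by (rule Gamma_plus1)
  moreover have "(1/2 + 1::real) = 3/2" by simp
  ultimately show ?thesis by (simp add: Gamma_one_half_real)
qed

lemma sqrt_exp_nn_integral:
  fixes b :: real assumes "b > 0"
  shows "(\<integral>\<^sup>+y. ennreal (indicator {0<..} y * (sqrt y * exp (-b*y))) \<partial>lborel) = ennreal (sqrt pi / (2 * b * sqrt b))"
proof -
  let ?f = "\<lambda>y. ennreal (indicator {0<..} y * (sqrt y * exp (-b*y)))"
  have m: "?f \<in> borel_measurable borel" by measurable
  have "integral\<^sup>N lborel ?f = ennreal \<bar>1/b\<bar> * (\<integral>\<^sup>+x. ?f (0 + 1/b * x) \<partial>lborel)"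
    by (rule nn_integral_real_affine[OF m]) (use assms in simp)
  also have "(\<integral>\<^sup>+x. ?f (0 + 1/b * x) \<partial>lborel) =
      (\<integral>\<^sup>+x. ennreal (1/sqrt b) * ennreal (indicator {0..} x * x powr (3/2 - 1) / exp x) \<partial>lborel)"
  proof (rule nn_integral_cong)
    fix x :: real
    show "?f (0 + 1/b * x) = ennreal (1/sqrt b) * ennreal (indicator {0..} x * x powr (3/2 - 1) / exp x)"
    proof (cases "x > 0")
      case True
      have "?f (0 + 1/b * x) = ennreal (sqrt x / sqrt b * exp (-x))"
        using True assms by (simp add: real_sqrt_divide)
      also have "\<dots> = ennreal (1/sqrt b * (x powr (3/2 - 1) / exp x))"
        using True by (simp add: powr_half_sqrt exp_minus field_simps)
      also have "\<dots> = ennreal (1/sqrt b) * ennreal (indicator {0..} x * x powr (3/2 - 1) / exp x)"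
        using True assms by (subst ennreal_mult[symmetric]) auto
      finally show ?thesis .
    next
      case False
      then have "1/b * x \<le> 0" using assms by (simp add: divide_nonpos_pos)
      then show ?thesis using False by (cases "x = 0") auto
    qed
  qed
  also have "\<dots> = ennreal (1/sqrt b) * (\<integral>\<^sup>+x. ennreal (indicator {0..} x * x powr (3/2 - 1) / exp x) \<partial>lborel)"
    by (rule nn_integral_cmult) measurable
  also have "(\<integral>\<^sup>+x. ennreal (indicator {0..} x * x powr (3/2 - 1) / exp x) \<partial>lborel) = ennreal (Gamma (3/2))"
    by (rule Gamma_conv_nn_integral_real[symmetric]) simp
  finally show ?thesis using assms
    by (simp add: Gamma_three_halves ennreal_mult[symmetric] field_simps)
qed

definition hh :: "real \<Rightarrow> real \<Rightarrow> real \<Rightarrow> real" where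
  "hh n a t = (n * a / (2 * sqrt(n * t) * sqrt(n * t+a)^3)) * ln(1+t) / (16 * pi^2 * a)"

lemma hh_nonneg: "n > 0 \<Longrightarrow> a > 0 \<Longrightarrow> t > 0 \<Longrightarrow> hh n a t \<ge> 0"
  unfolding hh_def by (auto intro!: divide_nonneg_pos mult_nonneg_nonneg)

lemma hh_integral:
  fixes n m a :: real assumes "n>0" "m>0" and a: "a = n+m^2"
  shows "(\<integral>\<^sup>+t. ennreal (indicator {0<..} t * hh n a t) \<partial>lborel) =
     ennreal ((- ln (4*n) + 2 * sqrt n / m * arctan (m / sqrt n)) / (16 * pi^2 * a) - (- ln a) / (16 * pi^2 * a))"
    "(- ln (4*n) + 2 * sqrt n / m * arctan (m / sqrt n)) / (16 * pi^2 * a) - (- ln a) / (16 * pi^2 * a) \<ge> 0"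
proof -
  have "a > 0" using a assms by (simp add: add_pos_nonneg)
  let ?F = "\<lambda>t. Fb n a m t / (16 * pi^2 * a)"
  have h1: "(0::ereal) < \<infinity>" by simp
  have h2: "DERIV ?F x :> hh n a x" if "0 < ereal x" "ereal x < \<infinity>" for x
  proof -
    from that have "x > 0" by (simp add: zero_ereal_def)
    show ?thesis unfolding hh_def by (rule DERIV_cdivide, rule dFb) (use assms a \<open>x>0\<close> in auto)
  qed
  have h3: "isCont (hh n a) x" if "0 < ereal x" "ereal x < \<infinity>" for x
  proof -
    from that have "x > 0" by (simp add: zero_ereal_def)
    then have p: "n*x > 0" "n*x+a > 0" using assms \<open>a>0\<close> by (auto intro!: add_pos_pos)
    show ?thesis unfolding hh_def using p \<open>x>0\<close> \<open>a>0\<close> by (intro continuous_intros) auto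
  qed
  have h4: "AE x in lborel. 0 < ereal x \<longrightarrow> ereal x < \<infinity> \<longrightarrow> 0 \<le> hh n a x"
    using hh_nonneg[OF assms(1) \<open>a>0\<close>] by (auto simp: zero_ereal_def)
  have h5: "((?F \<circ> real_of_ereal) \<longlongrightarrow> (- ln a) / (16 * pi^2 * a)) (at_right 0)"
    unfolding zero_ereal_def ereal_tendsto_simps
    by (intro tendsto_divide Fb_0 tendsto_const) (use assms \<open>a>0\<close> in auto)
  have h6: "((?F \<circ> real_of_ereal) \<longlongrightarrow> (- ln (4*n) + 2 * sqrt n / m * arctan (m / sqrt n)) / (16 * pi^2 * a)) (at_left \<infinity>)"
    unfolding ereal_tendsto_simps
    by (intro tendsto_divide Fb_top tendsto_const) (use assms \<open>a>0\<close> in auto)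
  note FTC = interval_integral_FTC_nonneg[OF h1 h2 h3 h4 h5 h6]
  have ei: "einterval 0 \<infinity> = {0<..}" by (auto simp: einterval_def zero_ereal_def)
  have int: "integrable lborel (\<lambda>x. indicator {0<..} x *\<^sub>R hh n a x)"
    using FTC(1) unfolding ei set_integrable_def .
  have "(\<integral>\<^sup>+t. ennreal (indicator {0<..} t * hh n a t) \<partial>lborel) =
      ennreal (integral\<^sup>L lborel (\<lambda>x. indicator {0<..} x *\<^sub>R hh n a x))"
    using nn_integral_eq_integral[OF int] hh_nonneg[OF assms(1) \<open>a>0\<close>]
    by (simp add: indicator_def)
  also have I: "integral\<^sup>L lborel (\<lambda>x. indicator {0<..} x *\<^sub>R hh n a x) = (LBINT x=0..\<infinity>. hh n a x)"
    by (simp add: interval_lebesgue_integral_def set_lebesgue_integral_def ei)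
  finally show "(\<integral>\<^sup>+t. ennreal (indicator {0<..} t * hh n a t) \<partial>lborel) =
     ennreal ((- ln (4*n) + 2 * sqrt n / m * arctan (m / sqrt n)) / (16 * pi^2 * a) - (- ln a) / (16 * pi^2 * a))"
    using FTC(2) by simp
  have "integral\<^sup>L lborel (\<lambda>x. indicator {0<..} x *\<^sub>R hh n a x) \<ge> 0"
    using hh_nonneg[OF assms(1) \<open>a>0\<close>] by (intro integral_nonneg_AE AE_I2) (auto simp: indicator_def)
  then show "(- ln (4*n) + 2 * sqrt n / m * arctan (m / sqrt n)) / (16 * pi^2 * a) - (- ln a) / (16 * pi^2 * a) \<ge> 0"
    using I FTC(2) by simp
qed

lemma alpha_meas[measurable]: "alpha \<in> borel_measurable borel"
  unfolding alpha_def set_lebesgue_integral_def by measurable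

lemma alpha_nonneg: "y \<ge> 0 \<Longrightarrow> alpha y \<ge> 0"
  unfolding alpha_def set_lebesgue_integral_def
  by (intro mult_nonneg_nonneg integral_nonneg) (auto simp: indicator_def)

lemma powr_mhalf: "t > 0 \<Longrightarrow> t powr (-1/2) = 1 / sqrt t"
  by (simp add: powr_minus_divide powr_half_sqrt)

lemma alpha_inner_finite:
  fixes y :: real assumes "y > 0"
  shows "(\<integral>\<^sup>+t. ennreal (indicator {0<..} t * (t powr (-1/2) * exp (- pi * y * t) * ln (1 + t))) \<partial>lborel) < \<infinity>"
proof -
  have "(\<integral>\<^sup>+t. ennreal (indicator {0<..} t * (t powr (-1/2) * exp (- pi * y * t) * ln (1 + t))) \<partial>lborel)
     \<le> (\<integral>\<^sup>+t. ennreal (indicator {0<..} t * (sqrt t * exp (- (pi * y) * t))) \<partial>lborel)"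
  proof (rule nn_integral_mono)
    fix t :: real
    show "ennreal (indicator {0<..} t * (t powr (-1/2) * exp (- pi * y * t) * ln (1 + t)))
      \<le> ennreal (indicator {0<..} t * (sqrt t * exp (- (pi * y) * t)))"
    proof (cases "t > 0")
      case True
      have "1 / sqrt t * ln (1 + t) \<le> 1 / sqrt t * t"
        using True by (intro mult_left_mono ln_add_one_self_le_self) auto
      also have "\<dots> = sqrt t" using True by (simp add: real_div_sqrt)
      finally have "t powr (-1/2) * ln (1 + t) \<le> sqrt t" using True by (subst powr_mhalf[OF True]) simp
      then have "t powr (-1/2) * ln (1 + t) * exp (- pi * y * t) \<le> sqrt t * exp (- pi * y * t)"
        by (intro mult_right_mono) auto
      then show ?thesis using True by (intro ennreal_leI) (simp add: algebra_simps)
    qed auto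
  qed
  also have "\<dots> = ennreal (sqrt pi / (2 * (pi * y) * sqrt (pi * y)))"
    by (rule sqrt_exp_nn_integral) (use assms in simp)
  also have "\<dots> < \<infinity>" by simp
  finally show ?thesis .
qed

lemma alpha_nn:
  fixes y :: real assumes "y > 0"
  shows "ennreal (alpha y) = ennreal (sqrt y / (4 * pi)) *
    (\<integral>\<^sup>+t. ennreal (indicator {0<..} t * (t powr (-1/2) * exp (- pi * y * t) * ln (1 + t))) \<partial>lborel)"
proof -
  let ?N = "\<integral>\<^sup>+t. ennreal (indicator {0<..} t * (t powr (-1/2) * exp (- pi * y * t) * ln (1 + t))) \<partial>lborel"
  have "(LBINT t:{0<..}. t powr (-1/2) * exp (- pi * y * t) * ln (1 + t)) = enn2real ?N"
    unfolding set_lebesgue_integral_def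
    by (subst integral_eq_nn_integral) (auto simp: indicator_def)
  then have aeq: "alpha y = sqrt y / (4 * pi) * enn2real ?N" by (simp add: alpha_def)
  have "ennreal (alpha y) = ennreal (sqrt y / (4 * pi)) * ennreal (enn2real ?N)"
    unfolding aeq by (rule ennreal_mult) (use assms in auto)
  also have "ennreal (enn2real ?N) = ?N" using alpha_inner_finite[OF assms] by simp
  finally show ?thesis .
qed

lemma inner_y:
  fixes n m t :: real assumes "n > 0" "m > 0" "t > 0"
  shows "(\<integral>\<^sup>+y. ennreal (indicator {0<..} y * indicator {0<..} t *
      (sqrt (4 * n * y) / (4 * pi) * exp (- 4 * pi * (n + m^2) * y) *
       (t powr (-1/2) * exp (- pi * (4 * n * y) * t) * ln (1 + t)))) \<partial>lborel)
    = ennreal (hh n (n + m^2) t)"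
proof -
  define a where "a = n + m^2"
  have "a > 0" using assms by (simp add: a_def add_pos_nonneg)
  define b where "b = 4 * pi * (a + n * t)"
  have "b > 0" using assms \<open>a>0\<close> by (simp add: b_def add_pos_pos)
  define K where "K = 2 * sqrt n / (4 * pi) * (t powr (-1/2) * ln (1 + t))"
  have "K \<ge> 0" using assms by (simp add: K_def)
  have "(\<integral>\<^sup>+y. ennreal (indicator {0<..} y * indicator {0<..} t *
      (sqrt (4 * n * y) / (4 * pi) * exp (- 4 * pi * (n + m^2) * y) *
       (t powr (-1/2) * exp (- pi * (4 * n * y) * t) * ln (1 + t)))) \<partial>lborel)
    = (\<integral>\<^sup>+y. ennreal K * ennreal (indicator {0<..} y * (sqrt y * exp (-b*y))) \<partial>lborel)"
  proof (rule nn_integral_cong)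
    fix y :: real
    show "ennreal (indicator {0<..} y * indicator {0<..} t *
      (sqrt (4 * n * y) / (4 * pi) * exp (- 4 * pi * (n + m^2) * y) *
       (t powr (-1/2) * exp (- pi * (4 * n * y) * t) * ln (1 + t))))
      = ennreal K * ennreal (indicator {0<..} y * (sqrt y * exp (-b*y)))"
    proof (cases "y > 0")
      case True
      have e: "exp (- 4 * pi * (n + m^2) * y) * exp (- pi * (4 * n * y) * t) = exp (-b*y)"
        by (simp add: b_def a_def exp_add[symmetric] algebra_simps)
      have sq: "sqrt (4 * n * y) = 2 * sqrt n * sqrt y" by (simp add: real_sqrt_mult)
      have "indicator {0<..} y * indicator {0<..} t *
        (sqrt (4 * n * y) / (4 * pi) * exp (- 4 * pi * (n + m^2) * y) *
         (t powr (-1/2) * exp (- pi * (4 * n * y) * t) * ln (1 + t)))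
        = K * (indicator {0<..} y * (sqrt y * exp (-b*y)))"
        using True assms unfolding sq K_def e[symmetric] by simp
      then show ?thesis using \<open>K \<ge> 0\<close> True by (simp add: ennreal_mult)
    qed auto
  qed
  also have "\<dots> = ennreal K * ennreal (sqrt pi / (2 * b * sqrt b))"
    using sqrt_exp_nn_integral[OF \<open>b>0\<close>] by (subst nn_integral_cmult) auto
  also have "\<dots> = ennreal (K * (sqrt pi / (2 * b * sqrt b)))"
    by (rule ennreal_mult[symmetric]) (use \<open>K \<ge> 0\<close> \<open>b > 0\<close> in auto)
  also have "K * (sqrt pi / (2 * b * sqrt b)) = hh n a t"
  proof -
    define sn where "sn = sqrt n"
    define st where "st = sqrt t"
    define sp where "sp = sqrt pi"
    define s where "s = sqrt (n*t+a)"
    have pos: "sn > 0" "st > 0" "sp > 0" "s > 0" using assms \<open>a>0\<close>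
      by (auto simp: sn_def st_def sp_def s_def intro!: add_pos_pos)
    have b4: "b = 4 * (pi * (n*t+a))" by (simp add: b_def algebra_simps)
    have sb: "sqrt b = 2 * sp * s" unfolding b4 sp_def s_def
      by (simp add: real_sqrt_mult)
    have bb: "b = 4 * sp^2 * s^2" unfolding b_def sp_def s_def using \<open>a>0\<close> assms
      by (simp add: algebra_simps add_pos_pos less_imp_le)
    have snt: "sqrt (n*t) = sn * st" by (simp add: sn_def st_def real_sqrt_mult)
    have pm: "t powr (-1/2) = 1 / st" unfolding st_def by (rule powr_mhalf[OF assms(3)])
    have nn: "n = sn^2" "pi = sp^2" using assms by (auto simp: sn_def sp_def)
    show ?thesis
      unfolding K_def hh_def pm snt s_def[symmetric] sb
      unfolding bb sn_def[symmetric] sp_def[symmetric]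
      unfolding nn using pos \<open>a>0\<close>
      by (simp add: field_simps power2_eq_square power3_eq_cube)
  qed
  finally show ?thesis by (simp add: a_def)
qed

theorem lemma4p2:
  fixes n m :: real
  assumes "n > 0" and "m > 0"
  shows "alpha_nm n m =
    1 / (4 * pi * m) * (2 * sqrt n * arctan (m / sqrt n) - m * ln (4 * n / (n + m^2)))"
proof -
  define a where "a = n + m^2"
  have "a > 0" using assms by (simp add: a_def add_pos_nonneg)
  define G where "G y t = indicator {0<..} y * indicator {0<..} t *
      (sqrt (4 * n * y) / (4 * pi) * exp (- 4 * pi * (n + m^2) * y) *
       (t powr (-1/2) * exp (- pi * (4 * n * y) * t) * ln (1 + t)))" for y t :: real
  have Gm: "(\<lambda>(t, y). ennreal (G y t)) \<in> borel_measurable (lborel \<Otimes>\<^sub>M lborel)"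
    unfolding G_def by measurable
  have S1: "(LBINT y:{0<..}. alpha (4 * n * y) * exp (- 4 * pi * (n + m^2) * y)) =
     enn2real (\<integral>\<^sup>+y. ennreal (indicator {0<..} y * (alpha (4 * n * y) * exp (- 4 * pi * (n + m^2) * y))) \<partial>lborel)"
    unfolding set_lebesgue_integral_def
    using assms by (subst integral_eq_nn_integral) (auto simp: indicator_def intro!: AE_I2 mult_nonneg_nonneg alpha_nonneg)
  have S2: "(\<integral>\<^sup>+y. ennreal (indicator {0<..} y * (alpha (4 * n * y) * exp (- 4 * pi * (n + m^2) * y))) \<partial>lborel)
      = (\<integral>\<^sup>+y. (\<integral>\<^sup>+t. ennreal (G y t) \<partial>lborel) \<partial>lborel)"
  proof (rule nn_integral_cong)
    fix y :: real
    show "ennreal (indicator {0<..} y * (alpha (4 * n * y) * exp (- 4 * pi * (n + m^2) * y)))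
      = (\<integral>\<^sup>+t. ennreal (G y t) \<partial>lborel)"
    proof (cases "y > 0")
      case True
      let ?c = "sqrt (4 * n * y) / (4 * pi) * exp (- 4 * pi * (n + m^2) * y)"
      have "4*n*y > 0" using True assms by simp
      then have "?c \<ge> 0" by simp
      have "ennreal (indicator {0<..} y * (alpha (4 * n * y) * exp (- 4 * pi * (n + m^2) * y)))
         = ennreal (alpha (4 * n * y)) * ennreal (exp (- 4 * pi * (n + m^2) * y))"
        using True assms by (simp add: ennreal_mult alpha_nonneg)
      also have "\<dots> = ennreal (sqrt (4 * n * y) / (4 * pi)) * (\<integral>\<^sup>+t. ennreal (indicator {0<..} t * (t powr (-1/2) * exp (- pi * (4 * n * y) * t) * ln (1 + t))) \<partial>lborel) * ennreal (exp (- 4 * pi * (n + m^2) * y))"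
        by (simp only: alpha_nn[OF \<open>4*n*y > 0\<close>])
      also have "ennreal ?c = ennreal (sqrt (4 * n * y) / (4 * pi)) * ennreal (exp (- 4 * pi * (n + m^2) * y))"
        by (rule ennreal_mult) (use \<open>4*n*y > 0\<close> in auto)
      then have "ennreal (sqrt (4 * n * y) / (4 * pi)) * (\<integral>\<^sup>+t. ennreal (indicator {0<..} t * (t powr (-1/2) * exp (- pi * (4 * n * y) * t) * ln (1 + t))) \<partial>lborel) * ennreal (exp (- 4 * pi * (n + m^2) * y))
         = ennreal ?c * (\<integral>\<^sup>+t. ennreal (indicator {0<..} t * (t powr (-1/2) * exp (- pi * (4 * n * y) * t) * ln (1 + t))) \<partial>lborel)"
        by (simp only: mult_ac)
      also have "\<dots> = (\<integral>\<^sup>+t. ennreal ?c * ennreal (indicator {0<..} t * (t powr (-1/2) * exp (- pi * (4 * n * y) * t) * ln (1 + t))) \<partial>lborel)"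
        by (subst nn_integral_cmult) auto
      also have "\<dots> = (\<integral>\<^sup>+t. ennreal (G y t) \<partial>lborel)"
      proof (rule nn_integral_cong)
        fix t :: real
        show "ennreal ?c * ennreal (indicator {0<..} t * (t powr (-1/2) * exp (- pi * (4 * n * y) * t) * ln (1 + t))) = ennreal (G y t)"
          using True \<open>?c \<ge> 0\<close> by (cases "t > 0") (auto simp: G_def ennreal_mult[symmetric] mult_ac)
      qed
      finally show ?thesis .
    qed (simp add: G_def)
  qed
  have S3: "(\<integral>\<^sup>+y. (\<integral>\<^sup>+t. ennreal (G y t) \<partial>lborel) \<partial>lborel) = (\<integral>\<^sup>+t. (\<integral>\<^sup>+y. ennreal (G y t) \<partial>lborel) \<partial>lborel)"
    using lborel_pair.Fubini'[OF Gm] by simp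
  have S4: "(\<integral>\<^sup>+t. (\<integral>\<^sup>+y. ennreal (G y t) \<partial>lborel) \<partial>lborel) = (\<integral>\<^sup>+t. ennreal (indicator {0<..} t * hh n a t) \<partial>lborel)"
  proof (rule nn_integral_cong)
    fix t :: real
    show "(\<integral>\<^sup>+y. ennreal (G y t) \<partial>lborel) = ennreal (indicator {0<..} t * hh n a t)"
    proof (cases "t > 0")
      case True
      then show ?thesis unfolding G_def a_def using inner_y[OF assms True] by simp
    qed (simp add: G_def)
  qed
  define V where "V = (- ln (4*n) + 2 * sqrt n / m * arctan (m / sqrt n)) / (16 * pi^2 * a) - (- ln a) / (16 * pi^2 * a)"
  have S5: "(\<integral>\<^sup>+t. ennreal (indicator {0<..} t * hh n a t) \<partial>lborel) = ennreal V"
    unfolding V_def by (rule hh_integral(1)[OF assms a_def])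
  have "V \<ge> 0"
    unfolding V_def by (rule hh_integral(2)[OF assms a_def])
  have L: "(LBINT y:{0<..}. alpha (4 * n * y) * exp (- 4 * pi * (n + m^2) * y)) = V"
    unfolding S1 S2 S3 S4 S5 using \<open>V \<ge> 0\<close> by simp
  have "alpha_nm n m = 4 * pi * a * V"
    unfolding alpha_nm_def L a_def by simp
  also have "\<dots> = 1 / (4 * pi * m) * (2 * sqrt n * arctan (m / sqrt n) - m * ln (4 * n / (n + m^2)))"
    unfolding V_def a_def[symmetric] using assms \<open>a > 0\<close>
    by (simp add: ln_div field_simps power2_eq_square)
  finally show ?thesis .
qed

end
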